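(* Let $m\ge1$ and let $W_m(t,x)=\sum_{w} t^{\mathrm{da}(w)}x^{\ell(w)}$, the sum running over all finite words $w$ (including the empty word) over the alphabet $\{1,2,\dots,m\}$, where $\ell(w)$ is the length of $w$. Then $$W_m(t,x)=\frac{1+mx}{1-mx^2-m(m-1)tx^2}.$$
   Context: For a word $w=a_1a_2\cdots a_\ell$, the degree of asymmetry is $\mathrm{da}(w)=|\{i: 1\le i\le \ell/2,\ a_i\neq a_{\ell+1-i}\}|$. *)

theory Defs
  imports "HOL-Computational_Algebra.Formal_Power_Series"
begin

text \<open>Degree of asymmetry of a word w = a_1 ... a_l (a list; position i corresponds to w ! (i-1)):
  the number of i with 1 <= i <= l/2 and a_i ~= a_(l+1-i).\<close>
definition da :: "'b list \<Rightarrow> nat" where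
  "da w = card {i::nat. 1 \<le> i \<and> 2 * i \<le> length w \<and> w ! (i - 1) \<noteq> w ! (length w - i)}"

definition words :: "nat \<Rightarrow> nat \<Rightarrow> nat list set" where
  "words m n = {w. set w \<subseteq> {1..m} \<and> length w = n}"

text \<open>W_m(t,x) as a formal power series in x, with t an element of the coefficient field:
  coefficient of x^n is the sum over words of length n of t^da(w).\<close>
definition W :: "nat \<Rightarrow> 'a::field \<Rightarrow> 'a fps" where
  "W m t = Abs_fps (\<lambda>n. \<Sum>w\<in>words m n. t ^ da w)"

end

theory Submission
  imports Defs
begin

lemma da_snoc_cons:
  "da (a # v @ [b]) = da v + (if a \<noteq> b then 1 else 0)"
proof -
  let ?w = "a # v @ [b]"
  define S where "S = {i::nat. 1 \<le> i \<and> 2 * i \<le> length v \<and> v ! (i - 1) \<noteq> v ! (length v - i)}"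
  have n0: "0 \<notin> S" unfolding S_def by auto
  have fin: "finite S" unfolding S_def by (rule finite_subset[of _ "{..length v}"]) auto
  have eq: "{i::nat. 1 \<le> i \<and> 2 * i \<le> length ?w \<and> ?w ! (i - 1) \<noteq> ?w ! (length ?w - i)}
      = (if a \<noteq> b then {1} else {}) \<union> Suc ` S"
  proof (intro set_eqI iffI)
    fix i assume "i \<in> {i::nat. 1 \<le> i \<and> 2 * i \<le> length ?w \<and> ?w ! (i - 1) \<noteq> ?w ! (length ?w - i)}"
    hence h: "1 \<le> i" "2 * i \<le> length v + 2" "?w ! (i - 1) \<noteq> ?w ! (length v + 2 - i)" by auto
    show "i \<in> (if a \<noteq> b then {1} else {}) \<union> Suc ` S"
    proof (cases "i = 1")
      case True
      then show ?thesis using h by (auto simp: nth_append)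
    next
      case False
      then obtain j where j: "i = Suc j" "j \<ge> 1" using h by (cases i) auto
      have "length v + 2 - i = Suc (length v - j)" using j h by auto
      moreover have "length v - j < length v" "j - 1 < length v" using j h by auto
      ultimately have "v ! (j - 1) \<noteq> v ! (length v - j)" using h j
        by (auto simp: nth_append)
      then have "j \<in> S" unfolding S_def using j h by auto
      then show ?thesis using j by auto
    qed
  next
    fix i assume "i \<in> (if a \<noteq> b then {1} else {}) \<union> Suc ` S"
    then show "i \<in> {i::nat. 1 \<le> i \<and> 2 * i \<le> length ?w \<and> ?w ! (i - 1) \<noteq> ?w ! (length ?w - i)}"
    proof
      assume "i \<in> (if a \<noteq> b then {1} else {})"
      then show ?thesis by (auto split: if_splits simp: nth_append)
    next
      assume "i \<in> Suc ` S"
      then obtain j where j: "i = Suc j" "j \<in> S" by auto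
      hence h: "1 \<le> j" "2 * j \<le> length v" "v ! (j - 1) \<noteq> v ! (length v - j)" unfolding S_def by auto
      have "length v + 2 - i = Suc (length v - j)" using j h by auto
      moreover have "length v - j < length v" "j - 1 < length v" using j h by auto
      ultimately show ?thesis using h j by (auto simp: nth_append)
    qed
  qed
  have "card ((if a \<noteq> b then {1} else {}) \<union> Suc ` S) = (if a \<noteq> b then 1 else 0) + card S"
    using fin n0 by (subst card_Un_disjoint) (auto simp: card_image)
  moreover have "da v = card S" unfolding da_def S_def by simp
  ultimately show ?thesis unfolding da_def using eq by simp
qed

lemma words_Suc_Suc:
  "words m (Suc (Suc n)) = (\<lambda>(a, v, b). a # v @ [b]) ` ({1..m} \<times> words m n \<times> {1..m})"
proof (intro set_eqI iffI)
  fix w assume w: "w \<in> words m (Suc (Suc n))"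
  then have l: "length w = Suc (Suc n)" and s: "set w \<subseteq> {1..m}" by (auto simp: words_def)
  then obtain a u where u: "w = a # u" by (cases w) auto
  with l have "u \<noteq> []" by auto
  then obtain v b where vb: "u = v @ [b]" by (metis rev_exhaust)
  show "w \<in> (\<lambda>(a, v, b). a # v @ [b]) ` ({1..m} \<times> words m n \<times> {1..m})"
    using u vb l s by (auto simp: words_def intro!: image_eqI[where x="(a, v, b)"])
next
  fix w assume "w \<in> (\<lambda>(a, v, b). a # v @ [b]) ` ({1..m} \<times> words m n \<times> {1..m})"
  then show "w \<in> words m (Suc (Suc n))" by (auto simp: words_def)
qed

lemma inj_build: "inj_on (\<lambda>(a, v, b). a # v @ [b]) ({1..m} \<times> words m n \<times> {1..m})"
  by (auto simp: inj_on_def words_def)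

lemma finite_words: "finite (words m n)"
proof -
  have "words m n \<subseteq> {w. set w \<subseteq> {1..m} \<and> length w = n}" by (simp add: words_def)
  then show ?thesis using finite_lists_length_eq[of "{1..m}" n] by (simp add: words_def)
qed

definition cc :: "nat \<Rightarrow> 'a::field \<Rightarrow> nat \<Rightarrow> 'a" where
  "cc m t n = (\<Sum>w\<in>words m n. t ^ da w)"

lemma inner_sum:
  fixes t :: "'a::field"
  assumes "a \<in> {1..m}"
  shows "(\<Sum>b\<in>{1..m}. t ^ (if a \<noteq> b then 1 else 0)) = 1 + of_nat (m - 1) * t"
proof -
  have "(\<Sum>b\<in>{1..m}. t ^ (if a \<noteq> b then 1 else 0)) =
        (\<Sum>b\<in>{a}. t ^ (if a \<noteq> b then 1 else 0)) + (\<Sum>b\<in>{1..m} - {a}. t ^ (if a \<noteq> b then 1 else 0))"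
    using assms by (subst sum.subset_diff[of "{a}"]) auto
  also have "(\<Sum>b\<in>{1..m} - {a}. t ^ (if a \<noteq> b then 1 else 0)) = (\<Sum>b\<in>{1..m} - {a}. t)"
    by (rule sum.cong) auto
  also have "\<dots> = of_nat (m - 1) * t" using assms by simp
  finally show ?thesis by simp
qed

lemma cc_rec:
  fixes t :: "'a::field"
  shows "cc m t (Suc (Suc n)) = (of_nat m * (1 + of_nat (m - 1) * t)) * cc m t n"
proof -
  have "cc m t (Suc (Suc n)) = (\<Sum>x\<in>{1..m} \<times> words m n \<times> {1..m}. t ^ da ((\<lambda>(a, v, b). a # v @ [b]) x))"
    unfolding cc_def words_Suc_Suc by (subst sum.reindex[OF inj_build]) (simp add: o_def)
  also have "\<dots> = (\<Sum>a\<in>{1..m}. \<Sum>y\<in>words m n \<times> {1..m}. t ^ da (a # fst y @ [snd y]))"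
    by (simp add: sum.cartesian_product split_beta)
  also have "\<dots> = (\<Sum>a\<in>{1..m}. \<Sum>v\<in>words m n. \<Sum>b\<in>{1..m}. t ^ da v * t ^ (if a \<noteq> b then 1 else 0))"
    by (intro sum.cong refl) (simp add: sum.cartesian_product split_beta da_snoc_cons power_add)
  also have "\<dots> = (\<Sum>a\<in>{1..m}. \<Sum>v\<in>words m n. t ^ da v * (1 + of_nat (m - 1) * t))"
    apply (intro sum.cong refl)
    apply (subst sum_distrib_left[symmetric])
    apply (subst inner_sum)
    by auto
  also have "\<dots> = (of_nat m * (1 + of_nat (m - 1) * t)) * cc m t n"
    by (cases "m = 0") (simp_all add: cc_def sum_distrib_right[symmetric] of_nat_diff)
  finally show ?thesis .
qed

lemma da_short: "length w \<le> 1 \<Longrightarrow> da w = 0"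
proof -
  assume "length w \<le> 1"
  then have "{i::nat. 1 \<le> i \<and> 2 * i \<le> length w \<and> w ! (i - 1) \<noteq> w ! (length w - i)} = {}" by auto
  then show ?thesis unfolding da_def by (simp only: card.empty)
qed

lemma cc0: "cc m t 0 = 1"
proof -
  have "words m 0 = {[]}" by (auto simp: words_def)
  then show ?thesis by (simp add: cc_def da_short)
qed

lemma cc1: "cc m t 1 = of_nat m"
proof -
  have e: "words m 1 = (\<lambda>a. [a]) ` {1..m}" by (auto simp: words_def length_Suc_conv)
  have "cc m t 1 = (\<Sum>a\<in>{1..m}. t ^ da [a])" unfolding cc_def e
    by (subst sum.reindex) (auto simp: inj_on_def)
  also have "\<dots> = of_nat m" by (simp add: da_short)
  finally show ?thesis .
qed

theorem corollary2p4:
  fixes m :: nat and t :: "'a::field"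
  assumes "m \<ge> 1"
  shows "W m t = (1 + fps_const (of_nat m) * fps_X) /
                 (1 - fps_const (of_nat m) * fps_X ^ 2
                    - fps_const (of_nat m * (of_nat m - 1) * t) * fps_X ^ 2)"
proof -
  define D :: "'a fps" where "D = 1 - fps_const (of_nat m) * fps_X ^ 2
                    - fps_const (of_nat m * (of_nat m - 1) * t) * fps_X ^ 2"
  define k :: 'a where "k = of_nat m * (1 + of_nat (m - 1) * t)"
  have k: "of_nat m + of_nat m * (of_nat m - 1) * t = k"
    using assms by (simp add: k_def of_nat_diff algebra_simps)
  have Dk: "D = 1 - fps_const k * fps_X ^ 2"
  proof -
    have "fps_const k = fps_const (of_nat m) + fps_const (of_nat m * (of_nat m - 1) * t)"
      by (simp only: k[symmetric] fps_const_add)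
    then show ?thesis unfolding D_def by (simp add: algebra_simps del: fps_const_add)
  qed
  have Wc: "W m t = Abs_fps (cc m t)" unfolding W_def cc_def[abs_def] by (rule refl)
  have WD: "W m t * D = W m t - fps_const k * (W m t * fps_X ^ 2)"
    by (simp add: Dk algebra_simps)
  have nth: "fps_nth (W m t * D) n = cc m t n - k * (if 2 \<le> n then cc m t (n - 2) else 0)" for n
    unfolding WD by (simp add: fps_X_power_mult_right_nth Wc)
  have "W m t * D = 1 + fps_const (of_nat m) * fps_X"
  proof (rule fps_ext)
    fix n
    show "fps_nth (W m t * D) n = fps_nth (1 + fps_const (of_nat m) * fps_X) n"
    proof (cases n)
      case 0 then show ?thesis by (subst nth) (simp add: cc0)
    next
      case (Suc n') note s = Suc
      show ?thesis
      proof (cases n')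
        case 0 then show ?thesis using s
          by (subst nth) (simp add: cc1[unfolded One_nat_def])
      next
        case (Suc n'') then show ?thesis using s
          by (subst nth) (simp add: cc_rec k_def)
      qed
    qed
  qed
  moreover have "D \<noteq> 0"
  proof
    assume "D = 0" then have "fps_nth D 0 = 0" by simp
    then show False by (simp add: Dk)
  qed
  ultimately have "(1 + fps_const (of_nat m) * fps_X) / D = W m t"
    by (metis nonzero_mult_div_cancel_right)
  then show ?thesis unfolding D_def by simp
qed

end
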